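(* For every $\alpha\in[0,1)$ and every integer $n\ge2$, the kernel $K_\alpha(x,y)=\dfrac{1}{x^2+2\cos(\pi\alpha)xy+y^2}$ on $(0,+\infty)^2$ satisfies $K_\alpha\in\mathrm{TP}_n\iff K_\alpha\in\mathrm{SR}_n$.
   Context: A kernel $K$ on $I\times I$ is $\mathrm{TP}_n$ if $\det[K(x_i,y_j)]_{1\le i,j\le m}\ge0$ for every $m\in\{1,\ldots,n\}$ and all $x_1<\cdots<x_m$, $y_1<\cdots<y_m$ in $I$; it is $\mathrm{SR}_n$ if there exist $\varepsilon_1,\ldots,\varepsilon_n\in\{-1,1\}$ with $\varepsilon_m\det[K(x_i,y_j)]_{1\le i,j\le m}\ge0$ for all such $m$ and points. *)

theory Defs
  imports Complex_Main "Jordan_Normal_Form.Determinant"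
begin

definition kmat :: "(real \<Rightarrow> real \<Rightarrow> real) \<Rightarrow> nat \<Rightarrow> (nat \<Rightarrow> real) \<Rightarrow> (nat \<Rightarrow> real) \<Rightarrow> real mat" where
  "kmat K m x y = mat m m (\<lambda>(i,j). K (x i) (y j))"

definition incr_pts :: "real set \<Rightarrow> nat \<Rightarrow> (nat \<Rightarrow> real) \<Rightarrow> bool" where
  "incr_pts I m x \<longleftrightarrow> (\<forall>i<m. x i \<in> I) \<and> (\<forall>i j. i < j \<and> j < m \<longrightarrow> x i < x j)"

definition TP :: "nat \<Rightarrow> real set \<Rightarrow> (real \<Rightarrow> real \<Rightarrow> real) \<Rightarrow> bool" where
  "TP n I K \<longleftrightarrow> (\<forall>m x y. 1 \<le> m \<and> m \<le> n \<and> incr_pts I m x \<and> incr_pts I m y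
      \<longrightarrow> det (kmat K m x y) \<ge> 0)"

definition SR :: "nat \<Rightarrow> real set \<Rightarrow> (real \<Rightarrow> real \<Rightarrow> real) \<Rightarrow> bool" where
  "SR n I K \<longleftrightarrow> (\<exists>\<epsilon> :: nat \<Rightarrow> real. (\<forall>m. 1 \<le> m \<and> m \<le> n \<longrightarrow> \<epsilon> m \<in> {-1, 1}) \<and>
      (\<forall>m x y. 1 \<le> m \<and> m \<le> n \<and> incr_pts I m x \<and> incr_pts I m y
      \<longrightarrow> \<epsilon> m * det (kmat K m x y) \<ge> 0))"

definition K_alpha :: "real \<Rightarrow> real \<Rightarrow> real \<Rightarrow> real" where
  "K_alpha \<alpha> x y = 1 / (x\<^sup>2 + 2 * cos (pi * \<alpha>) * x * y + y\<^sup>2)"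

end

theory Submission
  imports Defs
begin

lemma entry_lim:
  fixes c :: real
  assumes c: "c > -1"
  shows "((\<lambda>t::real. (t^i*t^j)/((t^i)\<^sup>2+2*c*t^i*t^j+(t^j)\<^sup>2)) \<longlongrightarrow>
     (if i = j then 1/(2+2*c) else 0)) at_top"
proof -
  have lt: "((\<lambda>t::real. (t^i*t^j)/((t^i)\<^sup>2+2*c*t^i*t^j+(t^j)\<^sup>2)) \<longlongrightarrow> 0) at_top"
    if ij: "i < j" for i j :: nat
  proof -
    define k where "k = j - i"
    have k: "k \<ge> 1" "j = i + k" using ij unfolding k_def by auto
    have r: "((\<lambda>t::real. inverse (t^k)) \<longlongrightarrow> 0) at_top"
      by (rule tendsto_inverse_0_at_top, rule filterlim_pow_at_top) (use k in \<open>auto simp: filterlim_ident\<close>)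
    have h: "((\<lambda>t::real. inverse (t^k) / ((inverse (t^k))\<^sup>2 + 2*c*inverse (t^k) + 1)) \<longlongrightarrow>
        0 / (0\<^sup>2 + 2*c*0 + 1)) at_top"
      by (intro tendsto_intros r) auto
    have ev: "\<forall>\<^sub>F t in at_top. inverse (t^k) / ((inverse (t^k))\<^sup>2 + 2*c*inverse (t^k) + 1)
        = (t^i*t^j)/((t^i)\<^sup>2+2*c*t^i*t^j+(t^j)\<^sup>2)"
      using eventually_gt_at_top[of "0::real"]
    proof eventually_elim
      case (elim t)
      have p: "t^i > 0" "t^k > 0" using elim by auto
      define u where "u = t^i"
      define v where "v = t^k"
      have uv: "u > 0" "v > 0" using p unfolding u_def v_def by auto
      have "2*v*(c+1) > 0" using c uv by simp
      then have "1 + 2*c*v + v\<^sup>2 > (1 - v)\<^sup>2" by (simp add: power2_eq_square algebra_simps)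
      then have nz: "1 + 2*c*v + v\<^sup>2 \<noteq> 0" by (smt (verit) zero_le_power2)
      have "inverse v / ((inverse v)\<^sup>2 + 2*c*inverse v + 1) = v / (1 + 2*c*v + v\<^sup>2)"
        using uv nz by (simp add: field_simps power2_eq_square)
      also have "\<dots> = (u\<^sup>2*v)/(u\<^sup>2*(1 + 2*c*v + v\<^sup>2))"
        using uv nz by simp
      also have "\<dots> = (u*(u*v))/(u\<^sup>2+2*c*u*(u*v)+(u*v)\<^sup>2)"
        by (simp add: power2_eq_square algebra_simps)
      finally show ?case unfolding k(2) power_add u_def v_def .

    qed
    show ?thesis using Lim_transform_eventually[OF h ev] by simp
  qed
  show ?thesis
  proof (cases "i = j")
    case True
    have ev: "\<forall>\<^sub>F t in at_top. 1/(2+2*c) = (t^i*t^j)/((t^i)\<^sup>2+2*c*t^i*t^j+(t^j)\<^sup>2)"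
      using eventually_gt_at_top[of "0::real"]
    proof eventually_elim
      case (elim t)
      have p: "t^i > 0" using elim by auto
      have "2 + 2*c \<noteq> 0" using c by auto
      then have "(2+2*c) * (t^i*t^i) \<noteq> 0" using p by (metis mult_eq_0_iff less_irrefl)
      moreover have "(t^i*t^j)/((t^i)\<^sup>2+2*c*t^i*t^j+(t^j)\<^sup>2) = (t^i*t^i)/((2+2*c)*(t^i*t^i))"
        using True by (simp add: power2_eq_square algebra_simps)
      ultimately show ?case by simp
    qed
    show ?thesis using Lim_transform_eventually[OF tendsto_const ev] True by simp
  next
    case False
    show ?thesis
    proof (cases "i < j")
      case True then show ?thesis using lt False by simp
    next
      case F2: False
      then have "j < i" using False by simp
      from lt[OF this] show ?thesis using False
        by (simp add: algebra_simps)
    qed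
  qed
qed

lemma pos_det:
  fixes c :: real
  assumes c: "c > -1"
  shows "\<exists>x. incr_pts {0<..} m x \<and> det (kmat (\<lambda>x y. 1/(x\<^sup>2+2*c*x*y+y\<^sup>2)) m x x) > 0"
proof -
  define a where "a = 1/(2+2*c)"
  have a: "a > 0" using c unfolding a_def by auto
  define g where "g t i j = (t^i*t^j)/((t^i)\<^sup>2+2*c*t^i*t^j+(t^j)\<^sup>2)" for t :: real and i j :: nat
  define P where "P = {p. p permutes {0..<m}}"
  have fin: "finite P" unfolding P_def by (simp add: finite_permutations)
  have lim: "((\<lambda>t. \<Sum>p\<in>P. signof p * (\<Prod>i=0..<m. g t i (p i))) \<longlongrightarrow>
     (\<Sum>p\<in>P. signof p * (\<Prod>i=0..<m. (a \<cdot>\<^sub>m 1\<^sub>m m) $$ (i, p i)))) at_top"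
  proof (rule tendsto_sum, rule tendsto_mult[OF tendsto_const], rule tendsto_prod)
    fix p i assume p: "p \<in> P" and i: "i \<in> {0..<m}"
    have "p i < m" using p i unfolding P_def by (auto dest: permutes_in_image)
    then have "(a \<cdot>\<^sub>m 1\<^sub>m m) $$ (i, p i) = (if i = p i then 1/(2+2*c) else 0)"
      using i by (simp add: a_def)
    then show "((\<lambda>t. g t i (p i)) \<longlongrightarrow> (a \<cdot>\<^sub>m 1\<^sub>m m) $$ (i, p i)) at_top"
      unfolding g_def using entry_lim[OF c] by simp
  qed
  have "(\<Sum>p\<in>P. signof p * (\<Prod>i=0..<m. (a \<cdot>\<^sub>m 1\<^sub>m m) $$ (i, p i))) = det (a \<cdot>\<^sub>m 1\<^sub>m m)"
    unfolding P_def by (rule det_def'[symmetric], simp)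
  also have "\<dots> = a ^ m" by simp
  finally have "((\<lambda>t. \<Sum>p\<in>P. signof p * (\<Prod>i=0..<m. g t i (p i))) \<longlongrightarrow> a ^ m) at_top"
    using lim by simp
  then have "\<forall>\<^sub>F t in at_top. (\<Sum>p\<in>P. signof p * (\<Prod>i=0..<m. g t i (p i))) > 0"
    using order_tendstoD(1)[of _ "a^m" at_top 0] a by simp
  then have "\<forall>\<^sub>F t in at_top. t > 1 \<and> (\<Sum>p\<in>P. signof p * (\<Prod>i=0..<m. g t i (p i))) > 0"
    using eventually_gt_at_top[of "1::real"] eventually_conj by blast
  then obtain t where t: "t > 1" and S: "(\<Sum>p\<in>P. signof p * (\<Prod>i=0..<m. g t i (p i))) > 0"
    unfolding eventually_at_top_linorder by blast
  define x where "x i = t^i" for i :: nat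
  define K where "K = (\<lambda>x y::real. 1/(x\<^sup>2+2*c*x*y+y\<^sup>2))"
  have incr: "incr_pts {0<..} m x"
    unfolding incr_pts_def x_def using t by (auto intro: power_strict_increasing)
  define D where "D = (\<Prod>i=0..<m. x i)"
  have D: "D > 0" unfolding D_def x_def using t by (auto intro: prod_pos)
  have "(\<Sum>p\<in>P. signof p * (\<Prod>i=0..<m. g t i (p i)))
      = (\<Sum>p\<in>P. D\<^sup>2 * (signof p * (\<Prod>i=0..<m. K (x i) (x (p i)))))"
  proof (rule sum.cong[OF refl])
    fix p assume p: "p \<in> P"
    have "(\<Prod>i=0..<m. g t i (p i)) = (\<Prod>i=0..<m. x i * x (p i) * K (x i) (x (p i)))"
      unfolding g_def K_def x_def by (rule prod.cong) auto
    also have "\<dots> = D * (\<Prod>i=0..<m. x (p i)) * (\<Prod>i=0..<m. K (x i) (x (p i)))"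
      unfolding D_def by (simp add: prod.distrib)
    also have "(\<Prod>i=0..<m. x (p i)) = D"
      unfolding D_def using prod.permute[of p "{0..<m}" x] p unfolding P_def by (simp add: comp_def)
    finally show "signof p * (\<Prod>i=0..<m. g t i (p i)) = D\<^sup>2 * (signof p * (\<Prod>i=0..<m. K (x i) (x (p i))))"
      by (simp add: power2_eq_square)
  qed
  also have "\<dots> = D\<^sup>2 * det (kmat K m x x)"
    unfolding sum_distrib_left[symmetric] P_def kmat_def
    by (subst det_def'[of _ m]) auto
  finally have "D\<^sup>2 * det (kmat K m x x) > 0" using S by simp
  then have "det (kmat K m x x) > 0" using D
    by (simp add: zero_less_mult_iff)
  then show ?thesis using incr unfolding K_def by blast
qed

theorem corollary1:
  fixes \<alpha> :: real and n :: nat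
  assumes "0 \<le> \<alpha>" and "\<alpha> < 1" and "2 \<le> n"
  shows "TP n {0<..} (K_alpha \<alpha>) \<longleftrightarrow> SR n {0<..} (K_alpha \<alpha>)"
proof
  assume "TP n {0<..} (K_alpha \<alpha>)"
  then show "SR n {0<..} (K_alpha \<alpha>)"
    unfolding TP_def SR_def by (intro exI[of _ "\<lambda>_. 1"]) auto
next
  assume "SR n {0<..} (K_alpha \<alpha>)"
  then obtain \<epsilon> :: "nat \<Rightarrow> real" where e1: "\<And>m. 1 \<le> m \<and> m \<le> n \<Longrightarrow> \<epsilon> m \<in> {-1, 1}"
    and e2: "\<And>m x y. 1 \<le> m \<and> m \<le> n \<and> incr_pts {0<..} m x \<and> incr_pts {0<..} m y
      \<Longrightarrow> \<epsilon> m * det (kmat (K_alpha \<alpha>) m x y) \<ge> 0"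
    unfolding SR_def by blast
  have c: "cos (pi * \<alpha>) > -1"
  proof -
    have "cos pi < cos (pi * \<alpha>)"
      by (rule cos_monotone_0_pi) (use assms in auto)
    then show ?thesis by simp
  qed
  have Keq: "K_alpha \<alpha> = (\<lambda>x y. 1/(x\<^sup>2+2*cos (pi * \<alpha>)*x*y+y\<^sup>2))"
    unfolding K_alpha_def by (intro ext) simp
  show "TP n {0<..} (K_alpha \<alpha>)"
    unfolding TP_def
  proof (intro allI impI)
    fix m x y assume h: "1 \<le> m \<and> m \<le> n \<and> incr_pts {0<..} m x \<and> incr_pts {0<..} m y"
    show "det (kmat (K_alpha \<alpha>) m x y) \<ge> 0"
    proof (cases "\<epsilon> m = 1")
      case True then show ?thesis using e2[OF h] by simp
    next
      case False
      then have em: "\<epsilon> m = -1" using e1 h by auto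
      obtain z where z: "incr_pts {0<..} m z" "det (kmat (K_alpha \<alpha>) m z z) > 0"
        using pos_det[OF c, of m] unfolding Keq by blast
      have "\<epsilon> m * det (kmat (K_alpha \<alpha>) m z z) \<ge> 0" using e2 h z(1) by blast
      then show ?thesis using em z(2) by simp
    qed
  qed
qed

end
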